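(* Let $X$ be an uncountable, $\sigma$-compact, separable metric space. Then $C_p(X)$ is not countable dense homogeneous.
   Context: $C_p(X)$ is the space of continuous functions $X\to\mathbb{R}$ with the topology of pointwise convergence. A space $Y$ is countable dense homogeneous if $Y$ is separable and for any two countable dense subsets $D,E\subseteq Y$ there is a homeomorphism $h\colon Y\to Y$ with $h[D]=E$. *)

theory Defs
  imports "HOL-Analysis.Analysis"
begin

definition Cp :: "'a::topological_space topology \<Rightarrow> ('a \<Rightarrow> real) topology" where
  "Cp T = subtopology (powertop_real (topspace T)) {f. continuous_map T euclideanreal f}"

definition countable_dense_homogeneous :: "'b topology \<Rightarrow> bool" where
  "countable_dense_homogeneous Y \<longleftrightarrow>
     separable_space Y \<and>
     (\<forall>D E. countable D \<and> D \<subseteq> topspace Y \<and> Y closure_of D = topspace Y \<and>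
            countable E \<and> E \<subseteq> topspace Y \<and> Y closure_of E = topspace Y \<longrightarrow>
            (\<exists>h. homeomorphic_map Y Y h \<and> h ` D = E))"

definition sigma_compact_space :: "'a topology \<Rightarrow> bool" where
  "sigma_compact_space T \<longleftrightarrow>
     (\<exists>K :: nat \<Rightarrow> 'a set. (\<forall>n. compactin T (K n)) \<and> (\<Union>n. K n) = topspace T)"

end

theory Submission
  imports Defs
begin


definition cond :: "'a::metric_space set \<Rightarrow> 'a set" where
  "cond S = {x. \<forall>e>0. uncountable (S \<inter> ball x e)}"

lemma cond_mono: "S \<subseteq> T \<Longrightarrow> cond S \<subseteq> cond T"
  unfolding cond_def by (auto dest: countable_subset[where A="S \<inter> ball _ _", rotated] simp: Int_mono)

lemma cond_rest_countable:
  fixes S Q :: "'a::metric_space set"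
  assumes Q: "countable Q" "closure Q = UNIV"
  shows "countable (S - cond S)"
proof -
  define B where "B = (\<lambda>(q,n::nat). if countable (S \<inter> ball q (inverse (real (Suc n))))
                 then S \<inter> ball q (inverse (real (Suc n))) else {})"
  have "S - cond S \<subseteq> \<Union> (B ` (Q \<times> UNIV))"
  proof
    fix x assume x: "x \<in> S - cond S"
    then obtain e where e: "e>0" "countable (S \<inter> ball x e)" by (auto simp: cond_def)
    obtain n where n: "n > 0" "inverse (real n) < e/2"
      using ex_inverse_of_nat_less[of "e/2"] e by auto
    then obtain m where m: "n = Suc m" using not0_implies_Suc by blast
    have "x \<in> closure Q" using Q by simp
    then obtain q where q: "q \<in> Q" "dist q x < inverse (real (Suc m))"
      using closure_approachable[of x Q] by (metis inverse_positive_iff_positive of_nat_0_less_iff zero_less_Suc)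
    have sub: "ball q (inverse (real (Suc m))) \<subseteq> ball x e"
    proof
      fix y assume "y \<in> ball q (inverse (real (Suc m)))"
      then have "dist q y < inverse (real (Suc m))" by simp
      then show "y \<in> ball x e" using q n m dist_triangle[of x y q] by (simp add: dist_commute)
    qed
    then have c: "countable (S \<inter> ball q (inverse (real (Suc m))))"
      using e countable_subset by (metis Int_mono subset_refl)
    have "x \<in> B (q, m)" using c x q by (simp add: B_def dist_commute)
    then show "x \<in> \<Union> (B ` (Q \<times> UNIV))" using q by blast
  qed
  moreover have "countable (\<Union> (B ` (Q \<times> UNIV)))"
    by (rule countable_UN) (auto simp: B_def Q(1))
  ultimately show ?thesis using countable_subset by blast
qed

lemma cond_uncountable:
  fixes S Q :: "'a::metric_space set"
  assumes Q: "countable Q" "closure Q = UNIV" and S: "uncountable S"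
  shows "uncountable (S \<inter> cond S)"
proof
  assume "countable (S \<inter> cond S)"
  moreover have "countable (S - cond S)" by (rule cond_rest_countable[OF Q])
  ultimately have "countable ((S \<inter> cond S) \<union> (S - cond S))" by simp
  moreover have "(S \<inter> cond S) \<union> (S - cond S) = S" by blast
  ultimately show False using S by simp
qed

lemma uncountable_two:
  assumes "uncountable S" obtains a b where "a \<in> S" "b \<in> S" "a \<noteq> b"
proof -
  have "infinite S" using assms countable_finite by blast
  then have "\<not> S \<subseteq> {}" "\<And>a. \<not> S \<subseteq> {a}" by (auto dest: finite_subset)
  then show ?thesis using that by blast
qed

lemma split_step:
  fixes K Q :: "'a::metric_space set"
  assumes Q: "countable Q" "closure Q = UNIV" and p: "p \<in> cond K" and r: "r > 0"
  shows "\<exists>a b r'. a \<in> K \<and> b \<in> K \<and> a \<in> cond K \<and> b \<in> cond K \<and> r' > 0 \<and>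
     cball a r' \<subseteq> cball p r \<and> cball b r' \<subseteq> cball p r \<and>
     ball a (2*r') \<subseteq> ball p (2*r) \<and> ball b (2*r') \<subseteq> ball p (2*r) \<and>
     ball a (2*r') \<inter> ball b (2*r') = {}"
proof -
  define U where "U = K \<inter> ball p (r/2)"
  have "uncountable U" using p r by (auto simp: cond_def U_def)
  then have "uncountable (U \<inter> cond U)" by (rule cond_uncountable[OF Q, rotated])
  then obtain a b where ab: "a \<in> U \<inter> cond U" "b \<in> U \<inter> cond U" "a \<noteq> b"
    by (rule uncountable_two)
  have cU: "cond U \<subseteq> cond K" by (rule cond_mono) (auto simp: U_def)
  define r' where "r' = min (r/4) (dist a b / 4)"
  have r'pos: "r' > 0" using ab r by (simp add: r'_def)
  have da: "dist p a < r/2" "dist p b < r/2" using ab by (auto simp: U_def)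
  show ?thesis
  proof (intro exI conjI)
    show "a \<in> K" "b \<in> K" using ab by (auto simp: U_def)
    show "a \<in> cond K" "b \<in> cond K" using ab cU by auto
    show "r' > 0" by (fact r'pos)
    have r'le: "r' \<le> r/4" by (simp add: r'_def)
    have tri: "\<And>t. dist p t \<le> dist p a + dist a t" "\<And>t. dist p t \<le> dist p b + dist b t"
      by (rule dist_triangle)+
    show "cball a r' \<subseteq> cball p r" "cball b r' \<subseteq> cball p r"
      using da r'le r'pos tri by (auto simp: subset_iff, (smt (verit))+)
    show "ball a (2*r') \<subseteq> ball p (2*r)" "ball b (2*r') \<subseteq> ball p (2*r)"
      using da r'le r'pos tri r by (auto simp: subset_iff, (smt (verit))+)
    show "ball a (2*r') \<inter> ball b (2*r') = {}"
    proof (rule ccontr)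
      assume "ball a (2*r') \<inter> ball b (2*r') \<noteq> {}"
      then obtain y where "dist a y < 2*r'" "dist b y < 2*r'" by auto
      then have "dist a b < 4 * r'" using dist_triangle[of a b y] by (simp add: dist_commute)
      then show False unfolding r'_def by linarith
    qed
  qed
qed

definition SP :: "'a::metric_space set \<Rightarrow> 'a \<Rightarrow> real \<Rightarrow> 'a \<times> 'a \<times> real \<Rightarrow> bool" where
  "SP K p r t \<longleftrightarrow> (case t of (a,b,r') \<Rightarrow> a \<in> K \<and> b \<in> K \<and> a \<in> cond K \<and> b \<in> cond K \<and> r' > 0 \<and>
     cball a r' \<subseteq> cball p r \<and> cball b r' \<subseteq> cball p r \<and>
     ball a (2*r') \<subseteq> ball p (2*r) \<and> ball b (2*r') \<subseteq> ball p (2*r) \<and>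
     ball a (2*r') \<inter> ball b (2*r') = {})"

definition splt :: "'a::metric_space set \<Rightarrow> 'a \<times> real \<Rightarrow> bool \<Rightarrow> 'a \<times> real" where
  "splt K z b = (let t = (SOME t. SP K (fst z) (snd z) t) in
      (if b then fst t else fst (snd t), snd (snd t)))"

primrec sch :: "'a::metric_space set \<Rightarrow> 'a \<times> real \<Rightarrow> bool list \<Rightarrow> 'a \<times> real" where
  "sch K z [] = z"
| "sch K z (b # s) = splt K (sch K z s) b"

locale cscheme =
  fixes K :: "'a::metric_space set" and p :: "bool list \<Rightarrow> 'a" and r :: "bool list \<Rightarrow> real"
  assumes K: "compact K" and pK: "p s \<in> K" and rpos: "r s > 0"
    and nest1: "cball (p (b#s)) (r (b#s)) \<subseteq> cball (p s) (r s)"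
    and nest2: "ball (p (b#s)) (2*r (b#s)) \<subseteq> ball (p s) (2*r s)"
    and disj: "ball (p (True#s)) (2*r (True#s)) \<inter> ball (p (False#s)) (2*r (False#s)) = {}"

lemma sch_props:
  fixes K Q :: "'a::metric_space set"
  assumes Q: "countable Q" "closure Q = UNIV" and z: "fst z \<in> K" "fst z \<in> cond K" "snd z > 0"
  shows "fst (sch K z s) \<in> K \<and> fst (sch K z s) \<in> cond K \<and> snd (sch K z s) > 0 \<and>
     SP K (fst (sch K z s)) (snd (sch K z s)) (SOME t. SP K (fst (sch K z s)) (snd (sch K z s)) t)"
proof (induction s)
  case Nil
  have "\<exists>t. SP K (fst z) (snd z) t"
    using split_step[OF Q z(2,3)] by (auto simp: SP_def)
  then show ?case using z by (simp add: someI_ex)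
next
  case (Cons b s)
  let ?z = "sch K z s"
  have sp: "SP K (fst ?z) (snd ?z) (SOME t. SP K (fst ?z) (snd ?z) t)" using Cons by blast
  obtain a c r' where t: "(SOME t. SP K (fst ?z) (snd ?z) t) = (a,c,r')" by (metis prod.exhaust)
  have A: "fst (sch K z (b#s)) \<in> K \<and> fst (sch K z (b#s)) \<in> cond K \<and> snd (sch K z (b#s)) > 0"
    using sp t by (auto simp: splt_def SP_def Let_def)
  then have "\<exists>t. SP K (fst (sch K z (b#s))) (snd (sch K z (b#s))) t"
    using split_step[OF Q, of "fst (sch K z (b#s))" K "snd (sch K z (b#s))"] by (auto simp: SP_def)
  then show ?case using A by (simp add: someI_ex del: sch.simps)
qed

lemma sch_cscheme:
  fixes K Q :: "'a::metric_space set"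
  assumes Q: "countable Q" "closure Q = UNIV" and z: "fst z \<in> K" "fst z \<in> cond K" "snd z > 0"
    and K: "compact K"
  shows "cscheme K (\<lambda>s. fst (sch K z s)) (\<lambda>s. snd (sch K z s))"
proof
  fix s b
  note P = sch_props[OF Q z, of s]
  let ?z = "sch K z s"
  obtain a c r' where t: "(SOME t. SP K (fst ?z) (snd ?z) t) = (a,c,r')" by (metis prod.exhaust)
  have sp: "SP K (fst ?z) (snd ?z) (a,c,r')" using P t by simp
  show "fst (sch K z s) \<in> K" "0 < snd (sch K z s)" using P by auto
  show "cball (fst (sch K z (b # s))) (snd (sch K z (b # s))) \<subseteq> cball (fst (sch K z s)) (snd (sch K z s))"
    using sp t by (auto simp: splt_def SP_def Let_def)
  show "ball (fst (sch K z (b # s))) (2 * snd (sch K z (b # s))) \<subseteq> ball (fst (sch K z s)) (2 * snd (sch K z s))"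
    using sp t by (auto simp: splt_def SP_def Let_def)
  show "ball (fst (sch K z (True # s))) (2 * snd (sch K z (True # s))) \<inter>
        ball (fst (sch K z (False # s))) (2 * snd (sch K z (False # s))) = {}"
    using sp t by (simp add: splt_def SP_def Let_def)
qed (fact K)

lemma exists_cscheme:
  assumes "uncountable (UNIV :: 'a::metric_space set)"
    and "sigma_compact_space (euclidean :: 'a topology)"
    and "separable_space (euclidean :: 'a topology)"
  obtains K p r where "cscheme (K :: 'a set) p r"
proof -
  obtain Q :: "'a set" where Q: "countable Q" "closure Q = UNIV"
    using assms(3) by (auto simp: separable_space_def)
  obtain KK :: "nat \<Rightarrow> 'a set" where KK: "\<And>n. compact (KK n)" "(\<Union>n. KK n) = UNIV"
    using assms(2) by (auto simp: sigma_compact_space_def)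
  have "\<exists>n. uncountable (KK n)"
  proof (rule ccontr)
    assume "\<not> ?thesis"
    then have "countable (\<Union>n. KK n)" by auto
    then show False using KK(2) assms(1) by simp
  qed
  then obtain n where n: "uncountable (KK n)" by blast
  then have "uncountable (KK n \<inter> cond (KK n))" by (rule cond_uncountable[OF Q, rotated])
  then obtain a where a: "a \<in> KK n" "a \<in> cond (KK n)"
    by (metis Int_iff countable_empty equals0I)
  show ?thesis
    by (rule that, rule sch_cscheme[OF Q, of "(a,1)"]) (use a KK in auto)
qed



definition Lev :: "nat \<Rightarrow> bool list set" where "Lev l = {s. length s = l}"

definition Idx :: "(nat \<times> bool list set) set" where
  "Idx = {(l,Z). Z \<subseteq> Lev l \<and> card Z \<le> l}"

lemma finite_Lev: "finite (Lev l)"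
  unfolding Lev_def using finite_lists_length_eq[of "UNIV::bool set" l] by simp

lemma countable_Idx: "countable Idx"
proof -
  have "Idx \<subseteq> UNIV \<times> Collect finite"
    unfolding Idx_def using finite_Lev finite_subset by auto
  moreover have "countable ((UNIV::nat set) \<times> (Collect finite :: bool list set set))"
    using countable_Collect_finite by (intro countable_SIGMA) auto
  ultimately show ?thesis using countable_subset by blast
qed

lemma two_pow_gt: "m \<ge> 3 \<Longrightarrow> 2 * m < (2::nat) ^ m"
proof (induction m rule: nat_induct_at_least)
  case base then show ?case by simp
next
  case (Suc n) then show ?case by simp
qed

lemma card_ext:
  assumes Z: "Z \<subseteq> Lev l" "card Z \<le> l" and s: "length s \<le> l" and big: "l < 2 ^ (l - length s)"
  shows "\<exists>t. length (t @ s) = l \<and> t @ s \<notin> Z"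
proof (rule ccontr)
  assume neg: "\<not> (\<exists>t. length (t @ s) = l \<and> t @ s \<notin> Z)"
  let ?m = "l - length s"
  let ?T = "{t :: bool list. set t \<subseteq> UNIV \<and> length t = ?m}"
  have sub: "(\<lambda>t. t @ s) ` ?T \<subseteq> Z" using neg s by auto
  have "card ((\<lambda>t. t @ s) ` ?T) = card ?T" by (rule card_image) (auto simp: inj_on_def)
  also have "\<dots> = 2 ^ ?m" using card_lists_length_eq[of "UNIV :: bool set" ?m] by simp
  finally have "2 ^ ?m \<le> card Z"
    using card_mono[OF finite_subset[OF Z(1) finite_Lev] sub] by simp
  then show False using Z big by linarith
qed

context cscheme
begin

definition bump :: "bool list \<Rightarrow> 'a \<Rightarrow> real" where
  "bump s x = max 0 (min 1 (2 - dist x (p s) / r s))"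

definition g :: "nat \<times> bool list set \<Rightarrow> 'a \<Rightarrow> real" where
  "g j x = (\<Sum>s\<in>Lev (fst j) - snd j. bump s x)"

lemma bump_nonneg: "bump s x \<ge> 0" by (simp add: bump_def)

lemma bump_one: "x \<in> cball (p s) (r s) \<Longrightarrow> bump s x = 1"
  using rpos[of s] by (simp add: bump_def dist_commute field_simps)

lemma bump_zero: assumes "x \<notin> ball (p s) (2 * r s)" shows "bump s x = 0"
proof -
  have "2 * r s \<le> dist x (p s)" using assms by (simp add: dist_commute)
  then have "2 \<le> dist x (p s) / r s" using rpos[of s] by (simp add: le_divide_eq)
  then show ?thesis by (simp add: bump_def)
qed

lemma g_nonneg: "g j x \<ge> 0"
  unfolding g_def by (rule sum_nonneg) (simp add: bump_nonneg)

lemma g_ge_bump: "s \<in> Lev (fst j) - snd j \<Longrightarrow> bump s x \<le> g j x"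
  unfolding g_def by (rule member_le_sum) (auto simp: bump_nonneg finite_Lev)

lemma continuous_bump: "continuous_on UNIV (bump s)"
  unfolding bump_def[abs_def] by (intro continuous_intros) (use rpos[of s] in simp)

lemma continuous_g: "continuous_on UNIV (g j)"
  unfolding g_def[abs_def] by (intro continuous_intros continuous_on_sum continuous_bump)

lemma nest_app: "cball (p (t@s)) (r (t@s)) \<subseteq> cball (p s) (r s)"
  by (induction t) (simp, metis append_Cons nest1 order_trans)

lemma disj_lev:
  "length s = length s' \<Longrightarrow> s \<noteq> s' \<Longrightarrow> ball (p s) (2 * r s) \<inter> ball (p s') (2 * r s') = {}"
proof (induction s s' rule: list_induct2)
  case Nil then show ?case by simp
next
  case (Cons b s b' s')
  show ?case
  proof (cases "s = s'")
    case True
    then have "b \<noteq> b'" using Cons by simp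
    then show ?thesis using disj[of s'] True by (cases b; cases b') (auto simp: Int_commute)
  next
    case False
    then have "ball (p s) (2 * r s) \<inter> ball (p s') (2 * r s') = {}" using Cons by simp
    then show ?thesis using nest2[of b s] nest2[of b' s'] by blast
  qed
qed

lemma vanish:
  assumes F: "finite F"
  shows "\<exists>j\<in>Idx. \<forall>x\<in>F. g j x = 0"
proof -
  define l where "l = card F"
  define Z where "Z = {s\<in>Lev l. \<exists>x\<in>F. x \<in> ball (p s) (2 * r s)}"
  define f where "f x = (SOME s. s\<in>Lev l \<and> x \<in> ball (p s) (2 * r s))" for x
  have "Z \<subseteq> f ` F"
  proof
    fix s assume "s \<in> Z"
    then obtain x where x: "x \<in> F" "s \<in> Lev l" "x \<in> ball (p s) (2 * r s)" by (auto simp: Z_def)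
    then have "\<exists>s. s\<in>Lev l \<and> x \<in> ball (p s) (2 * r s)" by blast
    then have fx: "f x \<in> Lev l \<and> x \<in> ball (p (f x)) (2 * r (f x))"
      unfolding f_def by (rule someI_ex)
    have "f x = s"
    proof (rule ccontr)
      assume "f x \<noteq> s"
      moreover have "length (f x) = length s" using fx x by (simp add: Lev_def)
      ultimately show False using disj_lev[of "f x" s] fx x by blast
    qed
    then show "s \<in> f ` F" using x by blast
  qed
  then have "card Z \<le> card (f ` F)" using F by (simp add: card_mono)
  also have "\<dots> \<le> l" unfolding l_def using F by (rule card_image_le)
  finally have "(l, Z) \<in> Idx" by (auto simp: Idx_def Z_def)
  moreover have "g (l, Z) x = 0" if "x \<in> F" for x
    unfolding g_def by (rule sum.neutral) (use that in \<open>auto simp: Z_def intro!: bump_zero\<close>)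
  ultimately show ?thesis by blast
qed

lemma b1:
  assumes "j \<in> Idx" shows "\<exists>x\<in>K. g j x \<ge> 1"
proof -
  obtain l Z where j: "j = (l, Z)" "Z \<subseteq> Lev l" "card Z \<le> l" using assms by (auto simp: Idx_def)
  have "l < 2 ^ l" by (rule less_exp)
  then obtain t where t: "length (t @ []) = l" "t @ [] \<notin> Z"
    using card_ext[OF j(2,3), of "[]"] by auto
  have "bump t (p t) \<le> g j (p t)" using t j by (intro g_ge_bump) (auto simp: Lev_def)
  moreover have "bump t (p t) = 1" by (rule bump_one) (use rpos[of t] in auto)
  ultimately show ?thesis using pK by force
qed

lemma step:
  assumes J: "J \<subseteq> Idx" "infinite J"
  shows "\<exists>s' j. j \<in> J \<and> (\<exists>t. s' = t @ s) \<and> length s' > length s \<and> fst j = length s' \<and> s' \<notin> snd j"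
proof -
  define N where "N = 2 * length s + 3"
  have "{j\<in>Idx. fst j < N} \<subseteq> (\<Union>l<N. {l} \<times> Pow (Lev l))"
    by (auto simp: Idx_def)
  moreover have "finite (\<Union>l<N. {l} \<times> Pow (Lev l))" by (auto simp: finite_Lev)
  ultimately have "finite {j\<in>Idx. fst j < N}" using finite_subset by blast
  then have "\<not> J \<subseteq> {j\<in>Idx. fst j < N}" using J finite_subset by blast
  then obtain l Z where lZ: "(l,Z) \<in> J" "l \<ge> N" using J by force
  then have Z: "Z \<subseteq> Lev l" "card Z \<le> l" using J by (auto simp: Idx_def)
  have m3: "l - length s \<ge> 3" using lZ by (simp add: N_def)
  have "2 * (l - length s) < 2 ^ (l - length s)" by (rule two_pow_gt[OF m3])
  moreover have "l \<le> 2 * (l - length s)" using lZ by (simp add: N_def)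
  ultimately have big: "l < 2 ^ (l - length s)" by linarith
  obtain t where t: "length (t @ s) = l" "t @ s \<notin> Z"
    using card_ext[OF Z, of s] big lZ by (auto simp: N_def)
  show ?thesis
    by (rule exI[of _ "t @ s"], rule exI[of _ "(l,Z)"]) (use t lZ in \<open>auto simp: N_def\<close>)
qed

lemma b2:
  assumes J: "J \<subseteq> Idx" "infinite J"
  shows "\<exists>x\<in>K. infinite {j\<in>J. g j x \<ge> 1}"
proof -
  obtain nxt jj where nj: "\<And>s. jj s \<in> J \<and> (\<exists>t. nxt s = t @ s) \<and> length (nxt s) > length s
      \<and> fst (jj s) = length (nxt s) \<and> nxt s \<notin> snd (jj s)"
    using step[OF J] by metis
  define sq where "sq i = (nxt ^^ i) []" for i
  have sqS: "sq (Suc i) = nxt (sq i)" for i by (simp add: sq_def)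
  define C where "C i = K \<inter> cball (p (sq i)) (r (sq i))" for i
  have "(\<Inter>n. C n) \<noteq> {}"
  proof (rule compact_space_imp_nest[of "top_of_set K"])
    show "compact_space (top_of_set K)" using K by (simp add: compact_space_subtopology)
    show "closedin (top_of_set K) (C n)" for n unfolding C_def by (intro closedin_closed_Int) simp
    show "C n \<noteq> {}" for n
    proof -
      have "p (sq n) \<in> C n" using pK[of "sq n"] rpos[of "sq n"] by (simp add: C_def)
      then show ?thesis by blast
    qed
    have "C (Suc n) \<subseteq> C n" for n
    proof -
      obtain t where "nxt (sq n) = t @ sq n" using nj[of "sq n"] by blast
      then show ?thesis using nest_app[of t "sq n"] unfolding C_def sqS by auto
    qed
    then show "decseq C" by (rule decseq_SucI)
  qed
  then obtain x where x: "\<And>i. x \<in> C i" by blast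
  have xK: "x \<in> K" using x[of 0] by (simp add: C_def)
  have ge: "g (jj (sq i)) x \<ge> 1" for i
  proof -
    have "bump (sq (Suc i)) x = 1" by (rule bump_one) (use x[of "Suc i"] in \<open>simp add: C_def\<close>)
    moreover have "bump (sq (Suc i)) x \<le> g (jj (sq i)) x"
      by (rule g_ge_bump) (use nj[of "sq i"] in \<open>simp add: sqS Lev_def\<close>)
    ultimately show ?thesis by simp
  qed
  have "strict_mono (\<lambda>i. fst (jj (sq i)))"
    by (rule strict_monoI_Suc) (use nj in \<open>simp add: sqS\<close>)
  then have "inj (\<lambda>i. jj (sq i))" unfolding inj_def using strict_mono_eq by metis
  then have "infinite (range (\<lambda>i. jj (sq i)))" by (rule range_inj_infinite)
  moreover have "range (\<lambda>i. jj (sq i)) \<subseteq> {j\<in>J. g j x \<ge> 1}" using nj ge by auto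
  ultimately show ?thesis using xK finite_subset by blast
qed

end



lemma topspace_Cp: "topspace (Cp (euclidean :: 'a::topological_space topology)) = {f. continuous_on UNIV f}"
  by (simp add: Cp_def continuous_map_iff_continuous2)

lemma Cp_limit_pointwise:
  assumes "limitin (Cp (euclidean :: 'a::topological_space topology)) s l F"
  shows "((\<lambda>k. s k x) \<longlongrightarrow> l x) F"
  using assms unfolding Cp_def limitin_subtopology limitin_componentwise limitin_canonical_iff
  by simp

lemma Cp_limit_const:
  assumes "c \<longlonglongrightarrow> c0"
  shows "limitin (Cp (euclidean :: 'a::topological_space topology)) (\<lambda>k x. c k) (\<lambda>x. c0) sequentially"
  unfolding Cp_def limitin_subtopology limitin_componentwise limitin_canonical_iff
  using assms by (simp add: continuous_map_iff_continuous2)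

lemma Cp_open_agree:
  fixes U :: "('a::topological_space \<Rightarrow> real) set"
  assumes "openin (Cp euclidean) U" "d \<in> U"
  obtains F where "finite F" "\<And>y. continuous_on UNIV y \<Longrightarrow> (\<forall>i\<in>F. y i = d i) \<Longrightarrow> y \<in> U"
proof -
  obtain V where V: "openin (powertop_real UNIV) V" "U = V \<inter> {f. continuous_map euclidean euclideanreal f}"
    using assms(1) by (auto simp: Cp_def openin_subtopology)
  then have "d \<in> V" using assms(2) by blast
  then obtain W where W: "finite {i. W i \<noteq> UNIV}" "d \<in> Pi\<^sub>E UNIV W" "Pi\<^sub>E UNIV W \<subseteq> V"
    using V(1) unfolding openin_product_topology_alt by force
  show ?thesis
  proof (rule that[OF W(1)])
    fix y :: "'a \<Rightarrow> real" assume y: "continuous_on UNIV y" "\<forall>i\<in>{i. W i \<noteq> UNIV}. y i = d i"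
    have "y \<in> Pi\<^sub>E UNIV W"
    proof (unfold PiE_iff, intro conjI ballI)
      fix i show "y i \<in> W i" using y(2) W(2) by (cases "W i = UNIV") auto
    qed simp
    then show "y \<in> U" using W(3) V(2) y(1) by (auto simp: continuous_map_iff_continuous2)
  qed
qed

theorem mainTheorem3:
  assumes "uncountable (UNIV :: 'a::metric_space set)"
    and "sigma_compact_space (euclidean :: 'a topology)"
    and "separable_space (euclidean :: 'a topology)"
  shows "\<not> countable_dense_homogeneous (Cp (euclidean :: 'a topology))"
proof
  assume cdh: "countable_dense_homogeneous (Cp (euclidean :: 'a topology))"
  let ?T = "Cp (euclidean :: 'a topology)"
  obtain K p r where cs: "cscheme (K :: 'a set) p r" using exists_cscheme[OF assms] by blast
  interpret cscheme K p r by (fact cs)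
  obtain D0 where D0: "countable D0" "D0 \<subseteq> topspace ?T" "?T closure_of D0 = topspace ?T"
    using cdh by (auto simp: countable_dense_homogeneous_def separable_space_def)
  have D0c: "continuous_on UNIV d" if "d \<in> D0" for d using D0(2) that topspace_Cp by blast
  have "\<exists>M\<ge>0. \<forall>x\<in>K. \<bar>d x\<bar> \<le> M" if "d \<in> D0" for d
  proof -
    have "compact (d ` K)" using K D0c[OF that] by (meson compact_continuous_image continuous_on_subset subset_UNIV)
    then obtain B where "\<forall>y\<in>d ` K. norm y \<le> B" using compact_imp_bounded bounded_iff by metis
    then show ?thesis by (intro exI[of _ "max B 0"]) auto
  qed
  then obtain Mf where Mf: "\<And>d. d \<in> D0 \<Longrightarrow> Mf d \<ge> 0 \<and> (\<forall>x\<in>K. \<bar>d x\<bar> \<le> Mf d)" by metis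
  define ix where "ix = to_nat_on (D0 \<times> Idx)"
  have ixinj: "inj_on ix (D0 \<times> Idx)"
    unfolding ix_def by (rule inj_on_to_nat_on) (simp add: D0(1) countable_Idx)
  define e where "e = (\<lambda>(d,j). (\<lambda>x. d x + (Mf d + real (ix (d,j))) * g j x))"
  define E where "E = e ` (D0 \<times> Idx)"
  have Ecount: "countable E" unfolding E_def by (simp add: D0(1) countable_Idx)
  have econt: "continuous_on UNIV (e q)" if "q \<in> D0 \<times> Idx" for q
    using that D0c unfolding e_def by (auto intro!: continuous_intros continuous_g)
  have Etop: "E \<subseteq> topspace ?T" using econt unfolding E_def topspace_Cp by auto
  have Eclos: "?T closure_of E = topspace ?T"
  proof
    show "?T closure_of E \<subseteq> topspace ?T" by (rule closure_of_subset_topspace)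
    show "topspace ?T \<subseteq> ?T closure_of E"
    proof
      fix f assume f: "f \<in> topspace ?T"
      show "f \<in> ?T closure_of E"
        unfolding in_closure_of
      proof (intro conjI allI impI)
        show "f \<in> topspace ?T" by (fact f)
        fix U assume U: "f \<in> U \<and> openin ?T U"
        have "f \<in> ?T closure_of D0" using D0(3) f by simp
        then obtain d where d: "d \<in> D0" "d \<in> U" using U unfolding in_closure_of by blast
        obtain F where F: "finite F" "\<And>y. continuous_on UNIV y \<Longrightarrow> (\<forall>i\<in>F. y i = d i) \<Longrightarrow> y \<in> U"
          using Cp_open_agree[of U d] U d by blast
        obtain j where j: "j \<in> Idx" "\<forall>x\<in>F. g j x = 0" using vanish[OF F(1)] by blast
        have "e (d,j) \<in> U"
          by (rule F(2)) (use econt[of "(d,j)"] d j in \<open>auto simp: e_def\<close>)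
        moreover have "e (d,j) \<in> E" using d j by (auto simp: E_def)
        ultimately show "\<exists>y. y \<in> E \<and> y \<in> U" by blast
      qed
    qed
  qed
  have noconv: False if s: "range s \<subseteq> E" "inj s" "limitin ?T s l sequentially" for s l
  proof -
    have "\<forall>k. \<exists>q\<in>D0 \<times> Idx. s k = e q" using s(1) unfolding E_def by blast
    then obtain rep where rep: "\<And>k. rep k \<in> D0 \<times> Idx" "\<And>k. s k = e (rep k)" by metis
    have repinj: "inj rep" using s(2) rep(2) by (metis injD injI)
    have "\<exists>x\<in>K. infinite {k. g (snd (rep k)) x \<ge> 1}"
    proof (cases "finite (range (snd \<circ> rep))")
      case True
      then obtain k0 where k0: "infinite {k. (snd \<circ> rep) k = (snd \<circ> rep) k0}"
        using pigeonhole_infinite[of "UNIV :: nat set" "snd \<circ> rep"] by auto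
      have "snd (rep k0) \<in> Idx" using rep(1)[of k0] by auto
      then obtain x where x: "x \<in> K" "g (snd (rep k0)) x \<ge> 1" using b1 by blast
      have "{k. (snd \<circ> rep) k = (snd \<circ> rep) k0} \<subseteq> {k. g (snd (rep k)) x \<ge> 1}" using x by auto
      then show ?thesis using x k0 finite_subset by blast
    next
      case False
      have "snd (rep k) \<in> Idx" for k using rep(1)[of k] by (cases "rep k") auto
      then have "range (snd \<circ> rep) \<subseteq> Idx" by auto
      then obtain x where x: "x \<in> K" "infinite {j\<in>range (snd \<circ> rep). g j x \<ge> 1}"
        using b2 False by blast
      have "{j\<in>range (snd \<circ> rep). g j x \<ge> 1} \<subseteq> (snd \<circ> rep) ` {k. g (snd (rep k)) x \<ge> 1}" by auto
      then show ?thesis using x finite_subset by blast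
    qed
    then obtain x where x: "x \<in> K" and A: "infinite {k. g (snd (rep k)) x \<ge> 1}" by blast
    have "convergent (\<lambda>k. s k x)"
      using Cp_limit_pointwise[OF s(3)] unfolding convergent_def by blast
    then have "Bseq (\<lambda>k. s k x)" by (rule convergent_imp_Bseq)
    then obtain B where "\<forall>k. norm (s k x) \<le> B"
      unfolding Bseq_def by blast
    then have B: "\<And>k. \<bar>s k x\<bar> \<le> B" by simp
    have low: "real (ix (rep k)) \<le> s k x" if "g (snd (rep k)) x \<ge> 1" for k
    proof -
      obtain d j where dj: "rep k = (d,j)" by (cases "rep k") blast
      have d: "d \<in> D0" using rep(1)[of k] dj by auto
      have M: "Mf d \<ge> 0" "\<bar>d x\<bar> \<le> Mf d" using Mf[OF d] x by auto
      have g1: "g j x \<ge> 1" using that dj by simp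
      have "(Mf d + real (ix (d,j))) * 1 \<le> (Mf d + real (ix (d,j))) * g j x"
        using g1 M by (intro mult_left_mono) auto
      then show ?thesis using M unfolding rep(2)[of k] dj e_def by simp
    qed
    have "inj_on (ix \<circ> rep) {k. g (snd (rep k)) x \<ge> 1}"
    proof (rule inj_onI)
      fix a b assume "(ix \<circ> rep) a = (ix \<circ> rep) b"
      then have "rep a = rep b" using inj_onD[OF ixinj] rep(1) by simp
      then show "a = b" using injD[OF repinj] by blast
    qed
    then have "infinite ((ix \<circ> rep) ` {k. g (snd (rep k)) x \<ge> 1})"
      using A finite_image_iff by blast
    then obtain n where n: "n > nat \<lceil>B\<rceil>" "n \<in> (ix \<circ> rep) ` {k. g (snd (rep k)) x \<ge> 1}"
      unfolding infinite_nat_iff_unbounded by blast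
    then obtain k where k: "g (snd (rep k)) x \<ge> 1" "n = ix (rep k)" by auto
    have "real n > B" using n(1) by linarith
    moreover have "real n \<le> s k x" using low[OF k(1)] k(2) by simp
    ultimately show False using B[of k] by linarith
  qed
  define cs where "cs = (\<lambda>k::nat. \<lambda>x::'a. inverse (real (Suc k)))"
  define D where "D = E \<union> range cs"
  have cslim: "limitin ?T cs (\<lambda>x. 0) sequentially"
    unfolding cs_def by (rule Cp_limit_const) (rule LIMSEQ_inverse_real_of_nat)
  have csinj: "inj cs"
  proof (rule injI)
    fix a b assume "cs a = cs b"
    then have "inverse (real (Suc a)) = inverse (real (Suc b))" unfolding cs_def by meson
    then show "a = b" by simp
  qed
  have cstop: "range cs \<subseteq> topspace ?T" unfolding topspace_Cp cs_def by auto
  have Dcount: "countable D" unfolding D_def using Ecount by simp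
  have Dtop: "D \<subseteq> topspace ?T" unfolding D_def using Etop cstop by auto
  have Dclos: "?T closure_of D = topspace ?T"
    using closure_of_mono[of E D ?T] Eclos closure_of_subset_topspace[of ?T D] unfolding D_def by blast
  obtain h where h: "homeomorphic_map ?T ?T h" "h ` D = E"
    using cdh Dcount Dtop Dclos Ecount Etop Eclos unfolding countable_dense_homogeneous_def by blast
  show False
  proof (rule noconv)
    show "range (h \<circ> cs) \<subseteq> E" using h(2) unfolding D_def by auto
    show "inj (h \<circ> cs)"
      by (rule comp_inj_on[OF csinj], rule inj_on_subset[OF homeomorphic_imp_injective_map[OF h(1)] cstop])
    show "limitin ?T (h \<circ> cs) (h (\<lambda>x. 0)) sequentially"
      by (rule continuous_map_limit[OF homeomorphic_imp_continuous_map[OF h(1)] cslim])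
  qed
qed

end
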